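(* For all $0\le T<S$ and $k\in\mathbb N_+$, $a(k,S)\le a(k,T)$.
   Context: Let $\lambda>0$ and let $N$ be a Poisson process with intensity $\lambda$, arrival times $0<\sigma_1<\sigma_2<\cdots$, and natural filtration $\mathcal F_t=\sigma(N_s:s\le t)$. Let $F:[0,\infty)\to[0,\infty)$ be strictly increasing and strictly convex with $F(0)=0$. For $k\in\{0,1,\dots\}$ let $\mathcal A_k$ be the set of $(\mathcal F_t)$-adapted, integer-valued, nonnegative, non-increasing processes $\xi$ with $\xi_0=k$ whose values change only at arrival times of $N$, and $v(k,T)=\inf_{\xi\in\mathcal A_k}\mathbb E[\sum_{i:\sigma_i\le T}F(\xi_{\sigma_i-}-\xi_{\sigma_i})+F(\xi_T)]$. For $k\in\mathbb N_+$, $a(k,T)$ is the smallest minimizer over $a\in\{1,\dots,k\}$ of $v(k-a,T)+F(a)$. *)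

theory Defs
  imports "HOL-Probability.Probability"
begin

definition strictly_convex_on :: "real set \<Rightarrow> (real \<Rightarrow> real) \<Rightarrow> bool" where
  "strictly_convex_on S f \<longleftrightarrow>
     (\<forall>x\<in>S. \<forall>y\<in>S. x \<noteq> y \<longrightarrow> (\<forall>t. 0 < t \<and> t < 1 \<longrightarrow>
        f ((1 - t) * x + t * y) < (1 - t) * f x + t * f y))"

text \<open>Canonical probability space of a Poisson process of intensity lam:
  a sample omega is the sequence of i.i.d. Exp(lam) inter-arrival times.\<close>
definition poisson_space :: "real \<Rightarrow> (nat \<Rightarrow> real) measure" where
  "poisson_space lam = PiM UNIV (\<lambda>_. density lborel (exponential_density lam))"

text \<open>The (i+1)-th arrival time sigma_(i+1) (0-indexed: arrival i).\<close>
definition arrival :: "nat \<Rightarrow> (nat \<Rightarrow> real) \<Rightarrow> real" where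
  "arrival i \<omega> = (\<Sum>j\<le>i. \<omega> j)"

text \<open>An admissible strategy is described by its jumps: d i omega is the amount
  sold at the arrival i (i.e. xi_(sigma_i-) - xi_(sigma_i)).  Adaptedness to the
  natural filtration of N means that d i depends only on the first i+1 arrival
  times, i.e. on the first i+1 inter-arrival times; xi stays nonnegative,
  i.e. the total sold never exceeds the initial inventory k.\<close>
definition admissible :: "real \<Rightarrow> nat \<Rightarrow> (nat \<Rightarrow> (nat \<Rightarrow> real) \<Rightarrow> nat) set" where
  "admissible lam k =
     {d. (\<forall>i. d i \<in> measurable (poisson_space lam) (count_space UNIV))
       \<and> (\<forall>i \<omega> \<omega>'. (\<forall>j\<le>i. \<omega> j = \<omega>' j) \<longrightarrow> d i \<omega> = d i \<omega>')
       \<and> (\<forall>\<omega> n. (\<Sum>i<n. d i \<omega>) \<le> k)}"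

text \<open>Realised cost up to horizon T: sum of F(jumps) over arrivals in [0,T]
  plus F(xi_T).  Only the (finitely many) nonzero jumps are summed, which is
  harmless since F 0 = 0.\<close>
definition cost :: "(real \<Rightarrow> real) \<Rightarrow> nat \<Rightarrow> real \<Rightarrow> (nat \<Rightarrow> (nat \<Rightarrow> real) \<Rightarrow> nat)
                     \<Rightarrow> (nat \<Rightarrow> real) \<Rightarrow> real" where
  "cost F k T d \<omega> =
     (let J = {i. arrival i \<omega> \<le> T \<and> d i \<omega> \<noteq> 0} in
       (\<Sum>i\<in>J. F (real (d i \<omega>))) + F (real (k - (\<Sum>i\<in>J. d i \<omega>))))"

definition v :: "real \<Rightarrow> (real \<Rightarrow> real) \<Rightarrow> nat \<Rightarrow> real \<Rightarrow> real" where
  "v lam F k T = Inf {integral\<^sup>L (poisson_space lam) (cost F k T d) | d. d \<in> admissible lam k}"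

definition a_opt :: "real \<Rightarrow> (real \<Rightarrow> real) \<Rightarrow> nat \<Rightarrow> real \<Rightarrow> nat" where
  "a_opt lam F k T = (LEAST a. a \<in> {1..k} \<and>
      (\<forall>b\<in>{1..k}. v lam F (k - a) T + F (real a) \<le> v lam F (k - b) T + F (real b)))"

end

theory Submission
  imports Defs
begin


lemma conv4:
  fixes F :: "real \<Rightarrow> real" and a b c d :: nat
  assumes cv: "strictly_convex_on {0..} F"
    and "a \<le> b" "b \<le> d" "a \<le> c" "c \<le> d" "a + d = b + c"
  shows "F (real b) + F (real c) \<le> F (real a) + F (real d)"
proof (cases "a = b \<or> b = d")
  case True
  then show ?thesis using assms by auto
next
  case False
  then have ab: "a < b" and bd: "b < d" using assms by auto
  define t where "t = (real b - real a) / (real d - real a)"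
  have t0: "0 < t" and t1: "t < 1" using ab bd by (auto simp: t_def field_simps)
  have ad: "real a \<noteq> real d" using ab bd by auto
  have tm: "t * (real d - real a) = real b - real a" unfolding t_def using ab bd by simp
  have hb: "(1 - t) * real a + t * real d = real b"
    using tm by (simp add: algebra_simps)
  have hc: "(1 - (1 - t)) * real a + (1 - t) * real d = real c"
  proof -
    have "real a + real d = real b + real c" using assms(6) by (metis of_nat_add)
    then show ?thesis using tm by (simp add: algebra_simps)
  qed
  have cvx: "\<And>x y s. x \<ge> 0 \<Longrightarrow> y \<ge> 0 \<Longrightarrow> x \<noteq> y \<Longrightarrow> 0 < s \<Longrightarrow> s < 1 \<Longrightarrow>
      F ((1 - s) * x + s * y) < (1 - s) * F x + s * F y"
    using cv unfolding strictly_convex_on_def by auto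
  have "F ((1 - t) * real a + t * real d) < (1 - t) * F (real a) + t * F (real d)"
    using cvx[of "real a" "real d" t] ad t0 t1 by auto
  moreover have "F ((1 - (1 - t)) * real a + (1 - t) * real d) < (1 - (1 - t)) * F (real a) + (1 - t) * F (real d)"
    using cvx[of "real a" "real d" "1 - t"] ad t0 t1 by auto
  ultimately show ?thesis unfolding hb hc by (simp add: algebra_simps)
qed

definition xinv :: "nat \<Rightarrow> (nat \<Rightarrow> nat) \<Rightarrow> nat \<Rightarrow> nat" where
  "xinv k e n = k - (\<Sum>j<n. e j)"

definition crossP :: "(nat \<Rightarrow> bool) \<Rightarrow> (nat \<Rightarrow> nat) \<Rightarrow> (nat \<Rightarrow> nat) \<Rightarrow> nat \<Rightarrow> nat \<Rightarrow> bool" where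
  "crossP P e1 e2 m j = (P j \<and> xinv (Suc m) e1 (Suc j) \<le> xinv m e2 (Suc j))"

definition swapA :: "(nat \<Rightarrow> bool) \<Rightarrow> (nat \<Rightarrow> nat) \<Rightarrow> (nat \<Rightarrow> nat) \<Rightarrow> nat \<Rightarrow> nat \<Rightarrow> nat" where
  "swapA P e1 e2 m i = (if \<exists>j<i. crossP P e1 e2 m j then e1 i
     else if crossP P e1 e2 m i then xinv m e2 i - xinv (Suc m) e1 (Suc i)
     else if P i then e2 i else 0)"

definition swapB :: "(nat \<Rightarrow> bool) \<Rightarrow> (nat \<Rightarrow> nat) \<Rightarrow> (nat \<Rightarrow> nat) \<Rightarrow> nat \<Rightarrow> nat \<Rightarrow> nat" where
  "swapB P e1 e2 m i = (if \<exists>j<i. crossP P e1 e2 m j then e2 i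
     else if crossP P e1 e2 m i then xinv (Suc m) e1 i - xinv m e2 (Suc i)
     else if P i then e1 i else e2 i)"

lemma sum_mono_nat_idx: "n \<le> n' \<Longrightarrow> (\<Sum>j<n. (e::nat\<Rightarrow>nat) j) \<le> (\<Sum>j<n'. e j)"
  by (rule sum_mono2) auto

lemma sum_const_after:
  assumes "\<And>i. t \<le> i \<Longrightarrow> (e::nat\<Rightarrow>nat) i = 0" "t \<le> n"
  shows "(\<Sum>j<n. e j) = (\<Sum>j<t. e j)"
  using assms(2)
proof (induction n rule: dec_induct)
  case (step n) then show ?case using assms(1)[of n] by simp
qed simp

context
  fixes m t N :: nat and P :: "nat \<Rightarrow> bool" and e1 e2 :: "nat \<Rightarrow> nat"
  assumes hP: "\<And>i. i < N \<Longrightarrow> P i \<longleftrightarrow> i < t" and htN: "t \<le> N"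
    and he1: "\<And>i. \<not> P i \<or> N \<le> i \<Longrightarrow> e1 i = 0"
    and he2: "\<And>i. N \<le> i \<Longrightarrow> e2 i = 0"
    and hs1: "\<And>n. (\<Sum>j<n. e1 j) \<le> Suc m"
    and hs2: "\<And>n. (\<Sum>j<n. e2 j) \<le> m"
begin

lemma e1_zero: "t \<le> i \<Longrightarrow> e1 i = 0"
  using hP[of i] he1[of i] by (cases "i < N") auto

lemma S1_const: "t \<le> n \<Longrightarrow> (\<Sum>j<n. e1 j) = (\<Sum>j<t. e1 j)"
  by (rule sum_const_after) (auto simp: e1_zero)

lemma not_crossed_gt:
  assumes "n \<le> t" "\<forall>j<n. \<not> crossP P e1 e2 m j"
  shows "xinv m e2 n < xinv (Suc m) e1 n"
proof (cases n)
  case 0 then show ?thesis by (simp add: xinv_def)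
next
  case (Suc k)
  have "P k" using hP[of k] assms htN Suc by auto
  with assms Suc show ?thesis by (auto simp: crossP_def)
qed

lemma no_cross:
  assumes "\<forall>j<t. \<not> crossP P e1 e2 m j"
  shows "\<not> crossP P e1 e2 m j"
proof (cases "j < t")
  case True then show ?thesis using assms by auto
next
  case False
  have g: "xinv m e2 t < xinv (Suc m) e1 t" using not_crossed_gt[of t] assms by auto
  have "xinv (Suc m) e1 (Suc j) = xinv (Suc m) e1 t" using False S1_const[of "Suc j"] by (simp add: xinv_def)
  moreover have "xinv m e2 (Suc j) \<le> xinv m e2 t"
    using sum_mono_nat_idx[of t "Suc j" e2] False by (simp add: xinv_def)
  ultimately show ?thesis using g by (auto simp: crossP_def)
qed

lemma c_lt_t:
  assumes "crossP P e1 e2 m c" "\<forall>j<c. \<not> crossP P e1 e2 m j"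
  shows "c < t"
proof (rule ccontr)
  assume "\<not> c < t"
  then have "\<forall>j<t. \<not> crossP P e1 e2 m j" using assms(2) by auto
  then show False using no_cross assms(1) by blast
qed

lemma cross_A:
  assumes c: "crossP P e1 e2 m c" "\<forall>j<c. \<not> crossP P e1 e2 m j"
  shows "swapA P e1 e2 m i = (if i < c then e2 i else if i = c then xinv m e2 c - xinv (Suc m) e1 (Suc c) else e1 i)"
proof -
  have ct: "c < t" using c_lt_t[OF c] .
  show ?thesis
  proof (cases "i < c")
    case True
    then have "P i" using hP[of i] ct htN by auto
    then show ?thesis using True c by (auto simp: swapA_def)
  next
    case False
    then show ?thesis using c by (auto simp: swapA_def)
  qed
qed

lemma cross_B:
  assumes c: "crossP P e1 e2 m c" "\<forall>j<c. \<not> crossP P e1 e2 m j"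
  shows "swapB P e1 e2 m i = (if i < c then e1 i else if i = c then xinv (Suc m) e1 c - xinv m e2 (Suc c) else e2 i)"
proof -
  have ct: "c < t" using c_lt_t[OF c] .
  show ?thesis
  proof (cases "i < c")
    case True
    then have "P i" using hP[of i] ct htN by auto
    then show ?thesis using True c by (auto simp: swapB_def)
  next
    case False
    then show ?thesis using c by (auto simp: swapB_def)
  qed
qed

lemma nocross_A:
  assumes "\<forall>j<t. \<not> crossP P e1 e2 m j"
  shows "swapA P e1 e2 m i = (if P i then e2 i else 0)"
  using no_cross[OF assms] by (auto simp: swapA_def)

lemma nocross_B:
  assumes "\<forall>j<t. \<not> crossP P e1 e2 m j"
  shows "swapB P e1 e2 m i = (if P i then e1 i else e2 i)"
  using no_cross[OF assms] by (auto simp: swapB_def)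

lemma cross_facts:
  assumes c: "crossP P e1 e2 m c" "\<forall>j<c. \<not> crossP P e1 e2 m j"
  shows "Suc m - (\<Sum>j<Suc c. e1 j) \<le> m - (\<Sum>j<Suc c. e2 j)"
    and "(\<Sum>j<c. e2 j) \<le> (\<Sum>j<Suc c. e2 j)"
    and "1 \<le> (\<Sum>j<Suc c. e1 j)"
    and "m - (\<Sum>j<c. e2 j) < Suc m - (\<Sum>j<c. e1 j)"
proof -
  show 1: "Suc m - (\<Sum>j<Suc c. e1 j) \<le> m - (\<Sum>j<Suc c. e2 j)" using c(1) by (simp add: crossP_def xinv_def)
  show "(\<Sum>j<c. e2 j) \<le> (\<Sum>j<Suc c. e2 j)" by simp
  show "1 \<le> (\<Sum>j<Suc c. e1 j)" using 1 hs1[of "Suc c"] by linarith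
  show "m - (\<Sum>j<c. e2 j) < Suc m - (\<Sum>j<c. e1 j)"
    using not_crossed_gt[of c] c_lt_t[OF c] c(2) by (simp add: xinv_def)
qed

lemma sumA_cross:
  assumes c: "crossP P e1 e2 m c" "\<forall>j<c. \<not> crossP P e1 e2 m j"
  shows "(\<Sum>i<n. swapA P e1 e2 m i) = (if n \<le> c then (\<Sum>j<n. e2 j) else (\<Sum>j<n. e1 j) - 1)"
proof (induction n)
  case 0 then show ?case by simp
next
  case (Suc n)
  note cf = cross_facts[OF c]
  have h1: "(\<Sum>j<Suc c. e1 j) \<le> Suc m" "(\<Sum>j<c. e2 j) \<le> m" by (rule hs1, rule hs2)
  show ?case
  proof (cases "n < c")
    case True then show ?thesis using Suc by (simp add: cross_A[OF c])
  next
    case False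
    show ?thesis
    proof (cases "n = c")
      case True
      then show ?thesis using Suc cf h1 by (simp add: cross_A[OF c] xinv_def)
    next
      case False
      with \<open>\<not> n < c\<close> have "c < n" by auto
      then have "(\<Sum>j<Suc c. e1 j) \<le> (\<Sum>j<n. e1 j)" by (intro sum_mono_nat_idx) auto
      then show ?thesis using Suc cf \<open>c < n\<close> by (simp add: cross_A[OF c])
    qed
  qed
qed

lemma sumB_cross:
  assumes c: "crossP P e1 e2 m c" "\<forall>j<c. \<not> crossP P e1 e2 m j"
  shows "(\<Sum>i<n. swapB P e1 e2 m i) = (if n \<le> c then (\<Sum>j<n. e1 j) else (\<Sum>j<n. e2 j) + 1)"
proof (induction n)
  case 0 then show ?case by simp
next
  case (Suc n)
  note cf = cross_facts[OF c]
  have h1: "(\<Sum>j<c. e1 j) \<le> Suc m" "(\<Sum>j<Suc c. e2 j) \<le> m" by (rule hs1, rule hs2)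
  show ?case
  proof (cases "n < c")
    case True then show ?thesis using Suc by (simp add: cross_B[OF c])
  next
    case False
    show ?thesis
    proof (cases "n = c")
      case True
      then show ?thesis using Suc cf h1 by (simp add: cross_B[OF c] xinv_def)
    next
      case False
      with \<open>\<not> n < c\<close> have "c < n" by auto
      then show ?thesis using Suc \<open>c < n\<close> by (simp add: cross_B[OF c])
    qed
  qed
qed

lemma sumA_nocross:
  assumes nc: "\<forall>j<t. \<not> crossP P e1 e2 m j"
  shows "(\<Sum>i<n. swapA P e1 e2 m i) = (\<Sum>j<min n t. e2 j)"
proof (induction n)
  case 0 then show ?case by simp
next
  case (Suc n)
  show ?case
  proof (cases "n < t")
    case True
    then have "P n" using hP[of n] htN by auto
    then show ?thesis using Suc True by (simp add: nocross_A[OF nc] min_def)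
  next
    case False
    have "(if P n then e2 n else 0) = 0" using hP[of n] he2[of n] False by (cases "n < N") auto
    then show ?thesis using Suc False by (simp add: nocross_A[OF nc] min_def)
  qed
qed

lemma sumB_nocross:
  assumes nc: "\<forall>j<t. \<not> crossP P e1 e2 m j"
  shows "(\<Sum>i<n. swapB P e1 e2 m i) = (\<Sum>j<min n t. e1 j) + ((\<Sum>j<n. e2 j) - (\<Sum>j<min n t. e2 j))"
proof (induction n)
  case 0 then show ?case by simp
next
  case (Suc n)
  show ?case
  proof (cases "n < t")
    case True
    then have "P n" using hP[of n] htN by auto
    then show ?thesis using Suc True by (simp add: nocross_B[OF nc] min_def)
  next
    case False
    have "(if P n then e1 n else e2 n) = e2 n" using e1_zero[of n] False hP[of n] he2[of n] by (cases "n < N") auto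
    moreover have "(\<Sum>j<t. e2 j) \<le> (\<Sum>j<n. e2 j)" using False by (intro sum_mono_nat_idx) auto
    ultimately show ?thesis using Suc False by (simp add: nocross_B[OF nc] min_def add.assoc)
  qed
qed

lemma cases_cross:
  obtains c where "crossP P e1 e2 m c" "\<forall>j<c. \<not> crossP P e1 e2 m j"
  | "\<forall>j<t. \<not> crossP P e1 e2 m j"
proof (cases "\<exists>c. crossP P e1 e2 m c")
  case True
  then obtain c where "crossP P e1 e2 m c" "\<forall>j<c. \<not> crossP P e1 e2 m j"
    using exists_least_iff[of "crossP P e1 e2 m"] by blast
  then show ?thesis using that by blast
next
  case False then show ?thesis using that by blast
qed

lemma nocross_S1_le:
  assumes nc: "\<forall>j<t. \<not> crossP P e1 e2 m j"
  shows "(\<Sum>j<t. e1 j) \<le> (\<Sum>j<t. e2 j)"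
proof -
  have "xinv m e2 t < xinv (Suc m) e1 t" using not_crossed_gt[of t] nc by auto
  then show ?thesis using hs1[of t] hs2[of t] by (simp add: xinv_def)
qed

lemma swapA_zero: "N \<le> i \<Longrightarrow> swapA P e1 e2 m i = 0"
proof (cases rule: cases_cross)
  case (1 c) assume "N \<le> i"
  then show ?thesis using c_lt_t[OF 1] htN he1[of i] by (simp add: cross_A[OF 1])
next
  case 2 assume "N \<le> i"
  then show ?thesis using he2[of i] by (simp add: nocross_A[OF 2])
qed

lemma swapB_zero: "N \<le> i \<Longrightarrow> swapB P e1 e2 m i = 0"
proof (cases rule: cases_cross)
  case (1 c) assume "N \<le> i"
  then show ?thesis using c_lt_t[OF 1] htN he2[of i] by (simp add: cross_B[OF 1])
next
  case 2 assume "N \<le> i"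
  then show ?thesis using he2[of i] he1[of i] by (simp add: nocross_B[OF 2])
qed

lemma swapA_P: "swapA P e1 e2 m i \<noteq> 0 \<Longrightarrow> P i"
proof (cases rule: cases_cross)
  case (1 c) assume a: "swapA P e1 e2 m i \<noteq> 0"
  have ct: "c < t" using c_lt_t[OF 1] .
  show ?thesis
  proof (cases "i \<le> c")
    case True
    then show ?thesis
    proof (cases "i = c")
      case True then show ?thesis using 1 by (simp add: crossP_def)
    next
      case False then show ?thesis using \<open>i \<le> c\<close> ct htN hP[of i] by auto
    qed
  next
    case False then show ?thesis using a he1[of i] by (auto simp: cross_A[OF 1])
  qed
next
  case 2 assume "swapA P e1 e2 m i \<noteq> 0"
  then show ?thesis by (simp add: nocross_A[OF 2] split: if_splits)
qed

lemma swapB_P: "swapB P e1 e2 m i \<noteq> 0 \<Longrightarrow> P i \<or> e2 i \<noteq> 0"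
proof (cases rule: cases_cross)
  case (1 c) assume a: "swapB P e1 e2 m i \<noteq> 0"
  have ct: "c < t" using c_lt_t[OF 1] .
  show ?thesis
  proof (cases "i \<le> c")
    case True
    then show ?thesis
    proof (cases "i = c")
      case True then show ?thesis using 1 by (simp add: crossP_def)
    next
      case False then show ?thesis using \<open>i \<le> c\<close> ct htN hP[of i] by auto
    qed
  next
    case False then show ?thesis using a by (auto simp: cross_B[OF 1])
  qed
next
  case 2 assume "swapB P e1 e2 m i \<noteq> 0"
  then show ?thesis by (simp add: nocross_B[OF 2] split: if_splits)
qed

lemma budgetA: "(\<Sum>i<n. swapA P e1 e2 m i) \<le> m"
proof (cases rule: cases_cross)
  case (1 c)
  show ?thesis using hs1[of n] hs2[of n] by (simp add: sumA_cross[OF 1]; arith)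
next
  case 2
  show ?thesis using hs2[of "min n t"] by (simp add: sumA_nocross[OF 2])
qed

lemma budgetB: "(\<Sum>i<n. swapB P e1 e2 m i) \<le> Suc m"
proof (cases rule: cases_cross)
  case (1 c)
  show ?thesis using hs1[of n] hs2[of n] by (simp add: sumB_cross[OF 1])
next
  case 2
  have le: "(\<Sum>j<t. e1 j) \<le> (\<Sum>j<t. e2 j)" using nocross_S1_le[OF 2] .
  show ?thesis
  proof (cases "n \<le> t")
    case True then show ?thesis using hs1[of n] by (simp add: sumB_nocross[OF 2] min_def)
  next
    case False
    have "(\<Sum>j<t. e2 j) \<le> (\<Sum>j<n. e2 j)" using False by (intro sum_mono_nat_idx) auto
    then show ?thesis using False le hs2[of n] by (simp add: sumB_nocross[OF 2] min_def)
  qed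
qed

lemma per_index:
  fixes F :: "real \<Rightarrow> real"
  assumes cv: "strictly_convex_on {0..} F" and F0: "F 0 = 0"
  shows "F (real (swapA P e1 e2 m i)) + F (real (swapB P e1 e2 m i)) \<le> F (real (e1 i)) + F (real (e2 i))"
proof (cases rule: cases_cross)
  case (1 c)
  show ?thesis
  proof (cases "i = c")
    case True
    note cf = cross_facts[OF 1]
    have h1: "(\<Sum>j<c. e1 j) + e1 c \<le> Suc m" using hs1[of "Suc c"] by simp
    have h2: "(\<Sum>j<c. e2 j) + e2 c \<le> m" using hs2[of "Suc c"] by simp
    have A: "swapA P e1 e2 m i = (m - (\<Sum>j<c. e2 j)) - (Suc m - ((\<Sum>j<c. e1 j) + e1 c))"
      using True by (simp add: cross_A[OF 1] xinv_def)
    have B: "swapB P e1 e2 m i = (Suc m - (\<Sum>j<c. e1 j)) - (m - ((\<Sum>j<c. e2 j) + e2 c))"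
      using True by (simp add: cross_B[OF 1] xinv_def)
    have c1: "Suc m - ((\<Sum>j<c. e1 j) + e1 c) \<le> m - ((\<Sum>j<c. e2 j) + e2 c)" using cf(1) by simp
    have c2: "m - (\<Sum>j<c. e2 j) < Suc m - (\<Sum>j<c. e1 j)" using cf(4) .
    have "F (real ((m - (\<Sum>j<c. e2 j)) - (Suc m - ((\<Sum>j<c. e1 j) + e1 c))))
        + F (real ((Suc m - (\<Sum>j<c. e1 j)) - (m - ((\<Sum>j<c. e2 j) + e2 c))))
        \<le> F (real (e2 c)) + F (real (e1 c))"
      by (rule conv4[OF cv]) (use h1 h2 c1 c2 in linarith)+
    then show ?thesis unfolding A B using True by simp
  next
    case False
    then show ?thesis by (cases "i < c") (simp_all add: cross_A[OF 1] cross_B[OF 1])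
  qed
next
  case 2
  show ?thesis using he1[of i] F0 by (simp add: nocross_A[OF 2] nocross_B[OF 2])
qed

lemma terminal:
  fixes F :: "real \<Rightarrow> real"
  assumes cv: "strictly_convex_on {0..} F"
  shows "F (real (m - (\<Sum>i<N. swapA P e1 e2 m i))) + F (real (Suc m - (\<Sum>i<N. swapB P e1 e2 m i)))
     \<le> F (real (Suc m - (\<Sum>i<N. e1 i))) + F (real (m - (\<Sum>i<N. e2 i)))"
proof (cases rule: cases_cross)
  case (1 c)
  have cN: "\<not> N \<le> c" using c_lt_t[OF 1] htN by auto
  have "1 \<le> (\<Sum>j<N. e1 j)"
    using cross_facts(3)[OF 1] sum_mono_nat_idx[of "Suc c" N e1] cN by linarith
  then show ?thesis using cN hs1[of N] hs2[of N]
    by (simp add: sumA_cross[OF 1] sumB_cross[OF 1] add.commute)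
next
  case 2
  have le: "(\<Sum>j<t. e1 j) \<le> (\<Sum>j<t. e2 j)" using nocross_S1_le[OF 2] .
  have S1N: "(\<Sum>j<N. e1 j) = (\<Sum>j<t. e1 j)" using S1_const[OF htN] .
  have m2: "(\<Sum>j<t. e2 j) \<le> (\<Sum>j<N. e2 j)" using htN by (intro sum_mono_nat_idx)
  have "F (real (m - (\<Sum>j<t. e2 j))) + F (real (Suc m - ((\<Sum>j<t. e1 j) + ((\<Sum>j<N. e2 j) - (\<Sum>j<t. e2 j)))))
     \<le> F (real (m - (\<Sum>j<N. e2 j))) + F (real (Suc m - (\<Sum>j<t. e1 j)))"
    by (intro conv4[OF cv]) (use le m2 hs2[of N] hs1[of t] in linarith)+
  then show ?thesis using htN
    by (simp add: sumA_nocross[OF 2] sumB_nocross[OF 2] S1N min_def add.commute)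
qed

lemma core_ineq:
  fixes F :: "real \<Rightarrow> real"
  assumes cv: "strictly_convex_on {0..} F" and F0: "F 0 = 0"
  shows "((\<Sum>i<N. F (real (swapA P e1 e2 m i))) + F (real (m - (\<Sum>i<N. swapA P e1 e2 m i))))
       + ((\<Sum>i<N. F (real (swapB P e1 e2 m i))) + F (real (Suc m - (\<Sum>i<N. swapB P e1 e2 m i))))
     \<le> ((\<Sum>i<N. F (real (e1 i))) + F (real (Suc m - (\<Sum>i<N. e1 i))))
       + ((\<Sum>i<N. F (real (e2 i))) + F (real (m - (\<Sum>i<N. e2 i))))"
proof -
  have "(\<Sum>i<N. F (real (swapA P e1 e2 m i)) + F (real (swapB P e1 e2 m i)))
      \<le> (\<Sum>i<N. F (real (e1 i)) + F (real (e2 i)))"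
    by (intro sum_mono per_index[OF cv F0])
  then have "(\<Sum>i<N. F (real (swapA P e1 e2 m i))) + (\<Sum>i<N. F (real (swapB P e1 e2 m i)))
      \<le> (\<Sum>i<N. F (real (e1 i))) + (\<Sum>i<N. F (real (e2 i)))"
    by (simp add: sum.distrib)
  then show ?thesis using terminal[OF cv] by linarith
qed

end


lemma prob_poisson: "lam > 0 \<Longrightarrow> prob_space (poisson_space lam)"
  unfolding poisson_space_def
  by (intro prob_space_PiM prob_space_exponential_density)

lemma arrival_meas[measurable]: "arrival i \<in> borel_measurable (poisson_space lam)"
  unfolding arrival_def poisson_space_def by measurable

lemma AE_nonneg:
  assumes "lam > 0"
  shows "AE \<omega> in poisson_space lam. \<forall>j. 0 \<le> \<omega> j"
  unfolding AE_all_countable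
proof
  fix j :: nat
  have "AE x in density lborel (exponential_density lam). 0 \<le> x"
    by (subst AE_density) (auto simp: exponential_density_def)
  then show "AE \<omega> in poisson_space lam. 0 \<le> \<omega> j"
    unfolding poisson_space_def
    by (intro AE_PiM_component prob_space_exponential_density assms) auto
qed

lemma test_meas:
  fixes d :: "nat \<Rightarrow> (nat \<Rightarrow> real) \<Rightarrow> nat" and F :: "real \<Rightarrow> real"
  assumes [measurable]: "\<And>i. d i \<in> measurable (poisson_space lam) (count_space UNIV)"
  shows "(\<lambda>\<omega>. (\<Sum>i<n. F (real (if arrival i \<omega> \<le> U then d i \<omega> else 0))) + F (real (k - (\<Sum>i<n. if arrival i \<omega> \<le> U then d i \<omega> else 0))))
     \<in> borel_measurable (poisson_space lam)"
  by measurable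

definition eoff :: "real \<Rightarrow> (nat \<Rightarrow> (nat \<Rightarrow> real) \<Rightarrow> nat) \<Rightarrow> (nat \<Rightarrow> real) \<Rightarrow> nat \<Rightarrow> nat" where
  "eoff U d \<omega> i = (if arrival i \<omega> \<le> U then d i \<omega> else 0)"

definition trunc :: "nat \<Rightarrow> (nat \<Rightarrow> nat) \<Rightarrow> nat \<Rightarrow> nat" where
  "trunc k e i = min k (\<Sum>j<Suc i. e j) - min k (\<Sum>j<i. e j)"

definition stratA :: "real \<Rightarrow> real \<Rightarrow> nat \<Rightarrow> (nat \<Rightarrow> (nat \<Rightarrow> real) \<Rightarrow> nat) \<Rightarrow> (nat \<Rightarrow> (nat \<Rightarrow> real) \<Rightarrow> nat) \<Rightarrow> nat \<Rightarrow> (nat \<Rightarrow> real) \<Rightarrow> nat" where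
  "stratA T S m d1 d2 i \<omega> = trunc m (swapA (\<lambda>j. arrival j \<omega> \<le> T) (eoff T d1 \<omega>) (eoff S d2 \<omega>) m) i"

definition stratB :: "real \<Rightarrow> real \<Rightarrow> nat \<Rightarrow> (nat \<Rightarrow> (nat \<Rightarrow> real) \<Rightarrow> nat) \<Rightarrow> (nat \<Rightarrow> (nat \<Rightarrow> real) \<Rightarrow> nat) \<Rightarrow> nat \<Rightarrow> (nat \<Rightarrow> real) \<Rightarrow> nat" where
  "stratB T S m d1 d2 i \<omega> = trunc (Suc m) (swapB (\<lambda>j. arrival j \<omega> \<le> T) (eoff T d1 \<omega>) (eoff S d2 \<omega>) m) i"

lemma trunc_sum: "(\<Sum>i<n. trunc k e i) = min k (\<Sum>j<n. e j)"
proof (induction n)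
  case (Suc n)
  have "min k (\<Sum>j<n. e j) \<le> min k (\<Sum>j<Suc n. e j)" by simp
  then show ?case using Suc by (simp add: trunc_def)
qed simp

lemma trunc_id: "(\<And>n. (\<Sum>j<n. e j) \<le> k) \<Longrightarrow> trunc k e i = e i"
  using le_SucI by (simp add: trunc_def) (metis lessThan_Suc_eq_insert_0 min.absorb2 sum.lessThan_Suc add_diff_cancel_left')

lemma xinv_local: "(\<forall>j<n. e j = e' j) \<Longrightarrow> xinv k e n = xinv k e' n"
  unfolding xinv_def by (metis (mono_tags, lifting) lessThan_iff sum.cong)

lemma crossP_local:
  "(\<forall>j\<le>i. P j = P' j \<and> e1 j = e1' j \<and> e2 j = e2' j) \<Longrightarrow> crossP P e1 e2 m i = crossP P' e1' e2' m i"
  unfolding crossP_def using xinv_local[of "Suc i" e1 e1'] xinv_local[of "Suc i" e2 e2'] by auto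

lemma swapA_local:
  assumes "\<forall>j\<le>i. P j = P' j \<and> e1 j = e1' j \<and> e2 j = e2' j"
  shows "swapA P e1 e2 m i = swapA P' e1' e2' m i"
proof -
  have c: "\<And>j. j \<le> i \<Longrightarrow> crossP P e1 e2 m j = crossP P' e1' e2' m j"
    using assms by (intro crossP_local) auto
  have x: "xinv m e2 i = xinv m e2' i" "xinv (Suc m) e1 (Suc i) = xinv (Suc m) e1' (Suc i)"
    using assms by (auto intro!: xinv_local)
  show ?thesis unfolding swapA_def using c x assms by (simp cong: conj_cong ex_cong1)
qed

lemma swapB_local:
  assumes "\<forall>j\<le>i. P j = P' j \<and> e1 j = e1' j \<and> e2 j = e2' j"
  shows "swapB P e1 e2 m i = swapB P' e1' e2' m i"
proof -
  have c: "\<And>j. j \<le> i \<Longrightarrow> crossP P e1 e2 m j = crossP P' e1' e2' m j"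
    using assms by (intro crossP_local) auto
  have x: "xinv (Suc m) e1 i = xinv (Suc m) e1' i" "xinv m e2 (Suc i) = xinv m e2' (Suc i)"
    using assms by (auto intro!: xinv_local)
  show ?thesis unfolding swapB_def using c x assms by (simp cong: conj_cong ex_cong1)
qed

lemma trunc_local: "(\<forall>j\<le>i. e j = e' j) \<Longrightarrow> trunc k e i = trunc k e' i"
  unfolding trunc_def by (metis (mono_tags, lifting) lessThan_iff less_Suc_eq_le less_imp_le sum.cong)

lemma arrival_local: "(\<forall>j\<le>i. \<omega> j = \<omega>' j) \<Longrightarrow> arrival i \<omega> = arrival i \<omega>'"
  unfolding arrival_def by simp

lemma adm_meas: "d \<in> admissible lam k \<Longrightarrow> d i \<in> measurable (poisson_space lam) (count_space UNIV)"
  unfolding admissible_def by auto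

lemma adm_adapt: "d \<in> admissible lam k \<Longrightarrow> (\<forall>j\<le>i. \<omega> j = \<omega>' j) \<Longrightarrow> d i \<omega> = d i \<omega>'"
  unfolding admissible_def by blast

lemma adm_budget: "d \<in> admissible lam k \<Longrightarrow> (\<Sum>i<n. d i \<omega>) \<le> k"
  unfolding admissible_def by blast

lemma eoff_local:
  assumes "d \<in> admissible lam k" "\<forall>j\<le>i. \<omega> j = \<omega>' j" "j \<le> i"
  shows "eoff U d \<omega> j = eoff U d \<omega>' j"
proof -
  have "\<forall>l\<le>j. \<omega> l = \<omega>' l" using assms by auto
  then show ?thesis unfolding eoff_def using arrival_local[of j \<omega> \<omega>'] adm_adapt[OF assms(1)] by auto
qed

lemma stratA_adm:
  assumes d1: "d1 \<in> admissible lam (Suc m)" and d2: "d2 \<in> admissible lam m"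
  shows "stratA T S m d1 d2 \<in> admissible lam m"
  unfolding admissible_def
proof (intro CollectI conjI allI impI)
  fix i
  note [measurable] = adm_meas[OF d1] adm_meas[OF d2]
  show "stratA T S m d1 d2 i \<in> measurable (poisson_space lam) (count_space UNIV)"
    unfolding stratA_def trunc_def swapA_def crossP_def xinv_def eoff_def by measurable
next
  fix i and \<omega> \<omega>' :: "nat \<Rightarrow> real"
  assume h: "\<forall>j\<le>i. \<omega> j = \<omega>' j"
  have ha: "\<And>l. l \<le> i \<Longrightarrow> arrival l \<omega> = arrival l \<omega>'" using h by (intro arrival_local) auto
  have "\<forall>j\<le>i. swapA (\<lambda>j. arrival j \<omega> \<le> T) (eoff T d1 \<omega>) (eoff S d2 \<omega>) m j
     = swapA (\<lambda>j. arrival j \<omega>' \<le> T) (eoff T d1 \<omega>') (eoff S d2 \<omega>') m j"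
  proof (intro allI impI, rule swapA_local)
    fix j assume "j \<le> i"
    then show "\<forall>l\<le>j. (arrival l \<omega> \<le> T) = (arrival l \<omega>' \<le> T) \<and> eoff T d1 \<omega> l = eoff T d1 \<omega>' l \<and> eoff S d2 \<omega> l = eoff S d2 \<omega>' l"
      using h ha eoff_local[OF d1 h] eoff_local[OF d2 h] by auto
  qed
  then show "stratA T S m d1 d2 i \<omega> = stratA T S m d1 d2 i \<omega>'"
    unfolding stratA_def by (rule trunc_local)
next
  fix \<omega> n
  show "(\<Sum>i<n. stratA T S m d1 d2 i \<omega>) \<le> m"
    unfolding stratA_def trunc_sum by simp
qed

lemma stratB_adm:
  assumes d1: "d1 \<in> admissible lam (Suc m)" and d2: "d2 \<in> admissible lam m"
  shows "stratB T S m d1 d2 \<in> admissible lam (Suc m)"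
  unfolding admissible_def
proof (intro CollectI conjI allI impI)
  fix i
  note [measurable] = adm_meas[OF d1] adm_meas[OF d2]
  show "stratB T S m d1 d2 i \<in> measurable (poisson_space lam) (count_space UNIV)"
    unfolding stratB_def trunc_def swapB_def crossP_def xinv_def eoff_def by measurable
next
  fix i and \<omega> \<omega>' :: "nat \<Rightarrow> real"
  assume h: "\<forall>j\<le>i. \<omega> j = \<omega>' j"
  have ha: "\<And>l. l \<le> i \<Longrightarrow> arrival l \<omega> = arrival l \<omega>'" using h by (intro arrival_local) auto
  have "\<forall>j\<le>i. swapB (\<lambda>j. arrival j \<omega> \<le> T) (eoff T d1 \<omega>) (eoff S d2 \<omega>) m j
     = swapB (\<lambda>j. arrival j \<omega>' \<le> T) (eoff T d1 \<omega>') (eoff S d2 \<omega>') m j"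
  proof (intro allI impI, rule swapB_local)
    fix j assume "j \<le> i"
    then show "\<forall>l\<le>j. (arrival l \<omega> \<le> T) = (arrival l \<omega>' \<le> T) \<and> eoff T d1 \<omega> l = eoff T d1 \<omega>' l \<and> eoff S d2 \<omega> l = eoff S d2 \<omega>' l"
      using h ha eoff_local[OF d1 h] eoff_local[OF d2 h] by auto
  qed
  then show "stratB T S m d1 d2 i \<omega> = stratB T S m d1 d2 i \<omega>'"
    unfolding stratB_def by (rule trunc_local)
next
  fix \<omega> n
  show "(\<Sum>i<n. stratB T S m d1 d2 i \<omega>) \<le> Suc m"
    unfolding stratB_def trunc_sum by simp
qed



lemma finite_support:
  fixes f :: "nat \<Rightarrow> nat"
  assumes b: "\<And>n. (\<Sum>i<n. f i) \<le> k"
  shows "finite {i. f i \<noteq> 0}"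
proof (rule ccontr)
  assume "infinite {i. f i \<noteq> 0}"
  then obtain B where B: "finite B" "card B = Suc k" "B \<subseteq> {i. f i \<noteq> 0}"
    using infinite_arbitrarily_large by blast
  obtain n where n: "\<forall>x\<in>B. x < n" using B(1) finite_nat_set_iff_bounded by auto
  have "card B = (\<Sum>i\<in>B. 1)" by simp
  also have "\<dots> \<le> (\<Sum>i\<in>B. f i)" using B(3) by (intro sum_mono) auto
  also have "\<dots> \<le> (\<Sum>i<n. f i)" using n by (intro sum_mono2) auto
  also have "\<dots> \<le> k" by (rule b)
  finally show False using B(2) by simp
qed

lemma exists_N:
  fixes f :: "nat \<Rightarrow> nat"
  assumes b: "\<And>n. (\<Sum>i<n. f i) \<le> k"
  shows "\<exists>N. \<forall>i. N \<le> i \<longrightarrow> f i = 0"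
proof -
  obtain N where "\<forall>x\<in>{i. f i \<noteq> 0}. x < N" using finite_support[OF b] finite_nat_set_iff_bounded by auto
  then show ?thesis by (metis (mono_tags, lifting) mem_Collect_eq not_le)
qed

lemma cost_eq:
  fixes F :: "real \<Rightarrow> real"
  assumes F0: "F 0 = 0" and hN: "\<And>i. N \<le> i \<Longrightarrow> arrival i \<omega> \<le> U \<Longrightarrow> g i \<omega> = 0"
  shows "cost F k U g \<omega> = (\<Sum>i<N. F (real (eoff U g \<omega> i))) + F (real (k - (\<Sum>i<N. eoff U g \<omega> i)))"
proof -
  define J where "J = {i. arrival i \<omega> \<le> U \<and> g i \<omega> \<noteq> 0}"
  have JN: "J \<subseteq> {..<N}"
  proof
    fix x assume "x \<in> J" then show "x \<in> {..<N}" using hN[of x] by (cases "N \<le> x") (auto simp: J_def)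
  qed
  have 1: "(\<Sum>i\<in>J. F (real (g i \<omega>))) = (\<Sum>i<N. F (real (eoff U g \<omega> i)))"
    by (rule sum.mono_neutral_cong_left) (use JN F0 in \<open>auto simp: J_def eoff_def\<close>)
  have 2: "(\<Sum>i\<in>J. g i \<omega>) = (\<Sum>i<N. eoff U g \<omega> i)"
    by (rule sum.mono_neutral_cong_left) (use JN in \<open>auto simp: J_def eoff_def\<close>)
  show ?thesis unfolding cost_def Let_def J_def[symmetric] 1 2 ..
qed

lemma eoff_budget:
  assumes d: "d \<in> admissible lam k" shows "(\<Sum>i<n. eoff U d \<omega> i) \<le> k"
proof -
  have "(\<Sum>i<n. eoff U d \<omega> i) \<le> (\<Sum>i<n. d i \<omega>)" by (intro sum_mono) (auto simp: eoff_def)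
  also have "\<dots> \<le> k" by (rule adm_budget[OF d])
  finally show ?thesis .
qed

lemma adm_N:
  assumes "d \<in> admissible lam k"
  shows "\<exists>N. \<forall>i. N \<le> i \<longrightarrow> d i \<omega> = 0"
  using exists_N[of "\<lambda>i. d i \<omega>" k] adm_budget[OF assms] by auto

lemma cost_meas:
  fixes F :: "real \<Rightarrow> real"
  assumes d: "d \<in> admissible lam k" and F0: "F 0 = 0"
  shows "cost F k U d \<in> borel_measurable (poisson_space lam)"
proof (rule borel_measurable_LIMSEQ_real)
  note [measurable] = adm_meas[OF d]
  fix n
  show "(\<lambda>\<omega>. (\<Sum>i<n. F (real (eoff U d \<omega> i))) + F (real (k - (\<Sum>i<n. eoff U d \<omega> i))))
     \<in> borel_measurable (poisson_space lam)"
    unfolding eoff_def by measurable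
next
  fix \<omega>
  obtain N where N: "\<forall>i. N \<le> i \<longrightarrow> d i \<omega> = 0" using adm_N[OF d] by blast
  show "(\<lambda>n. (\<Sum>i<n. F (real (eoff U d \<omega> i))) + F (real (k - (\<Sum>i<n. eoff U d \<omega> i)))) \<longlonglongrightarrow> cost F k U d \<omega>"
  proof (rule tendsto_eventually)
    show "\<forall>\<^sub>F n in sequentially. (\<Sum>i<n. F (real (eoff U d \<omega> i))) + F (real (k - (\<Sum>i<n. eoff U d \<omega> i))) = cost F k U d \<omega>"
      using eventually_ge_at_top[of N]
      by eventually_elim (use N in \<open>auto intro!: cost_eq[where F=F, OF F0, symmetric]\<close>)
  qed
qed

lemma Fmono: fixes F :: "real \<Rightarrow> real" shows "strict_mono_on {0..} F \<Longrightarrow> a \<le> b \<Longrightarrow> F (real a) \<le> F (real b)"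
  by (rule strict_mono_on_leD) auto

lemma cost_bounds:
  fixes F :: "real \<Rightarrow> real"
  assumes d: "d \<in> admissible lam k" and F0: "F 0 = 0" and Fnn: "\<forall>x\<ge>0. F x \<ge> 0"
    and mono: "strict_mono_on {0..} F"
  shows "0 \<le> cost F k U d \<omega>" "cost F k U d \<omega> \<le> real k * F (real k) + F (real k)"
proof -
  obtain N where N: "\<forall>i. N \<le> i \<longrightarrow> d i \<omega> = 0" using adm_N[OF d] by blast
  have ce: "cost F k U d \<omega> = (\<Sum>i<N. F (real (eoff U d \<omega> i))) + F (real (k - (\<Sum>i<N. eoff U d \<omega> i)))"
    using N by (intro cost_eq[where F=F, OF F0]) auto
  show "0 \<le> cost F k U d \<omega>" unfolding ce using Fnn by (intro add_nonneg_nonneg sum_nonneg) auto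
  have Fk: "0 \<le> F (real k)" using Fnn by auto
  have each: "F (real (eoff U d \<omega> i)) \<le> real (eoff U d \<omega> i) * F (real k)" for i
  proof (cases "eoff U d \<omega> i = 0")
    case True then show ?thesis using F0 by simp
  next
    case False
    have "eoff U d \<omega> i \<le> (\<Sum>j<Suc i. eoff U d \<omega> j)" by simp
    also have "\<dots> \<le> k" by (rule eoff_budget[OF d])
    finally have "F (real (eoff U d \<omega> i)) \<le> F (real k)" by (rule Fmono[OF mono])
    also have "\<dots> \<le> real (eoff U d \<omega> i) * F (real k)" using False Fk
    proof -
      have "(1::real) \<le> real (eoff U d \<omega> i)" using False by simp
      then show ?thesis using mult_right_mono[of 1 "real (eoff U d \<omega> i)" "F (real k)"] Fk by simp
    qed
    finally show ?thesis .
  qed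
  have "(\<Sum>i<N. F (real (eoff U d \<omega> i))) \<le> (\<Sum>i<N. real (eoff U d \<omega> i) * F (real k))"
    by (intro sum_mono each)
  also have "\<dots> = real (\<Sum>i<N. eoff U d \<omega> i) * F (real k)" by (simp add: sum_distrib_right)
  also have "\<dots> \<le> real k * F (real k)"
  proof -
    have hb: "real (\<Sum>i<N. eoff U d \<omega> i) \<le> real k" using eoff_budget[OF d, where n=N and U=U and \<omega>=\<omega>] by (simp only: of_nat_le_iff)
    show ?thesis using mult_right_mono[OF hb Fk] .
  qed
  finally have s1: "(\<Sum>i<N. F (real (eoff U d \<omega> i))) \<le> real k * F (real k)" .
  have s2: "F (real (k - (\<Sum>i<N. eoff U d \<omega> i))) \<le> F (real k)" by (rule Fmono[OF mono]) simp
  show "cost F k U d \<omega> \<le> real k * F (real k) + F (real k)" unfolding ce using s1 s2 by linarith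
qed

lemma cost_integrable:
  fixes F :: "real \<Rightarrow> real"
  assumes lam: "lam > 0" and d: "d \<in> admissible lam k" and F0: "F 0 = 0" and Fnn: "\<forall>x\<ge>0. F x \<ge> 0"
    and mono: "strict_mono_on {0..} F"
  shows "integrable (poisson_space lam) (cost F k U d)"
proof -
  interpret prob_space "poisson_space lam" by (rule prob_poisson[OF lam])
  show ?thesis
  proof (rule integrable_const_bound)
    show "AE \<omega> in poisson_space lam. norm (cost F k U d \<omega>) \<le> real k * F (real k) + F (real k)"
      using cost_bounds[OF d F0 Fnn mono] by auto
    show "cost F k U d \<in> borel_measurable (poisson_space lam)" by (rule cost_meas[where F=F, OF d F0])
  qed
qed



lemma init_seg:
  fixes Q :: "nat \<Rightarrow> bool" and n :: nat
  assumes dc: "\<And>i j. j \<le> i \<Longrightarrow> Q i \<Longrightarrow> Q j"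
  shows "\<exists>t\<le>n. \<forall>i<n. Q i \<longleftrightarrow> i < t"
proof (induction n)
  case 0 then show ?case by auto
next
  case (Suc n)
  then obtain t where t: "t \<le> n" "\<forall>i<n. Q i \<longleftrightarrow> i < t" by blast
  show ?case
  proof (cases "t = n \<and> Q n")
    case True
    then show ?thesis using t by (intro exI[of _ "Suc n"]) (auto simp: less_Suc_eq)
  next
    case False
    have nP: "\<not> Q n"
    proof (cases "t = n")
      case True then show ?thesis using False by auto
    next
      case False then have "t < n" using t by auto
      then show ?thesis using t dc[of t n] by auto
    qed
    have "\<forall>i<Suc n. Q i \<longleftrightarrow> i < t" using t nP by (auto simp: less_Suc_eq)
    then show ?thesis using t by (intro exI[of _ t]) auto
  qed
qed

lemma arrival_mono:
  assumes "\<forall>j. 0 \<le> \<omega> j" "j \<le> i"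
  shows "arrival j \<omega> \<le> arrival i \<omega>"
  unfolding arrival_def using assms by (intro sum_mono2) auto

lemma pointwise:
  fixes F :: "real \<Rightarrow> real"
  assumes cv: "strictly_convex_on {0..} F" and F0: "F 0 = 0"
    and d1: "d1 \<in> admissible lam (Suc m)" and d2: "d2 \<in> admissible lam m"
    and TS: "T \<le> S" and nn: "\<forall>j. 0 \<le> \<omega> j"
  shows "cost F m T (stratA T S m d1 d2) \<omega> + cost F (Suc m) S (stratB T S m d1 d2) \<omega>
     \<le> cost F (Suc m) T d1 \<omega> + cost F m S d2 \<omega>"
proof -
  define P where "P = (\<lambda>j. arrival j \<omega> \<le> T)"
  define e1 where "e1 = eoff T d1 \<omega>"
  define e2 where "e2 = eoff S d2 \<omega>"
  obtain N1 where N1: "\<forall>i. N1 \<le> i \<longrightarrow> d1 i \<omega> = 0" using adm_N[OF d1] by blast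
  obtain N2 where N2: "\<forall>i. N2 \<le> i \<longrightarrow> d2 i \<omega> = 0" using adm_N[OF d2] by blast
  define N where "N = max N1 N2"
  have dc: "P j" if "j \<le> i" "P i" for i j
  proof -
    have "arrival j \<omega> \<le> arrival i \<omega>" using arrival_mono[OF nn that(1)] .
    then show ?thesis using that(2) unfolding P_def by linarith
  qed
  have "\<exists>t\<le>N. \<forall>i<N. P i \<longleftrightarrow> i < t" by (rule init_seg) (rule dc)
  then obtain t where t: "t \<le> N" "\<forall>i<N. P i \<longleftrightarrow> i < t" by blast
  have hP: "\<And>i. i < N \<Longrightarrow> P i \<longleftrightarrow> i < t" using t by auto
  have he1: "\<And>i. \<not> P i \<or> N \<le> i \<Longrightarrow> e1 i = 0" using N1 unfolding e1_def eoff_def P_def N_def by auto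
  have he2: "\<And>i. N \<le> i \<Longrightarrow> e2 i = 0" using N2 unfolding e2_def eoff_def N_def by auto
  have hs1: "\<And>n. (\<Sum>j<n. e1 j) \<le> Suc m" unfolding e1_def by (rule eoff_budget[OF d1])
  have hs2: "\<And>n. (\<Sum>j<n. e2 j) \<le> m" unfolding e2_def by (rule eoff_budget[OF d2])
  note ctx = hP t(1) he1 he2 hs1 hs2
  have sA: "stratA T S m d1 d2 i \<omega> = swapA P e1 e2 m i" for i
    unfolding stratA_def P_def[symmetric] e1_def[symmetric] e2_def[symmetric]
    by (rule trunc_id) (rule budgetA[OF ctx])
  have sB: "stratB T S m d1 d2 i \<omega> = swapB P e1 e2 m i" for i
    unfolding stratB_def P_def[symmetric] e1_def[symmetric] e2_def[symmetric]
    by (rule trunc_id) (rule budgetB[OF ctx])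
  have eA: "eoff T (stratA T S m d1 d2) \<omega> i = swapA P e1 e2 m i" for i
    using swapA_P[OF ctx, of i] unfolding eoff_def sA P_def by auto
  have eB: "eoff S (stratB T S m d1 d2) \<omega> i = swapB P e1 e2 m i" for i
  proof -
    have "swapB P e1 e2 m i \<noteq> 0 \<Longrightarrow> arrival i \<omega> \<le> S"
      using swapB_P[OF ctx, of i] TS unfolding P_def e2_def eoff_def by (auto split: if_splits)
    then show ?thesis unfolding eoff_def sB by auto
  qed
  have cA: "cost F m T (stratA T S m d1 d2) \<omega> = (\<Sum>i<N. F (real (swapA P e1 e2 m i))) + F (real (m - (\<Sum>i<N. swapA P e1 e2 m i)))"
    using cost_eq[where F=F, OF F0, of N \<omega> T "stratA T S m d1 d2" m] swapA_zero[OF ctx] by (simp add: sA eA)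
  have cB: "cost F (Suc m) S (stratB T S m d1 d2) \<omega> = (\<Sum>i<N. F (real (swapB P e1 e2 m i))) + F (real (Suc m - (\<Sum>i<N. swapB P e1 e2 m i)))"
    using cost_eq[where F=F, OF F0, of N \<omega> S "stratB T S m d1 d2" "Suc m"] swapB_zero[OF ctx] by (simp add: sB eB)
  have c1: "cost F (Suc m) T d1 \<omega> = (\<Sum>i<N. F (real (e1 i))) + F (real (Suc m - (\<Sum>i<N. e1 i)))"
    unfolding e1_def by (rule cost_eq[where F=F, OF F0]) (use N1 in \<open>auto simp: N_def\<close>)
  have c2: "cost F m S d2 \<omega> = (\<Sum>i<N. F (real (e2 i))) + F (real (m - (\<Sum>i<N. e2 i)))"
    unfolding e2_def by (rule cost_eq[where F=F, OF F0]) (use N2 in \<open>auto simp: N_def\<close>)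
  show ?thesis unfolding cA cB c1 c2 by (rule core_ineq[OF ctx cv F0])
qed



lemma zero_adm: "(\<lambda>i \<omega>. 0) \<in> admissible lam k"
  unfolding admissible_def by auto

context
  fixes lam :: real and F :: "real \<Rightarrow> real"
  assumes lam: "lam > 0" and Fnn: "\<forall>x\<ge>0. F x \<ge> 0" and mono: "strict_mono_on {0..} F"
    and cv: "strictly_convex_on {0..} F" and F0: "F 0 = 0"
begin

lemma bdd: "bdd_below {integral\<^sup>L (poisson_space lam) (cost F k U d) | d. d \<in> admissible lam k}"
proof (rule bdd_belowI)
  fix x assume "x \<in> {integral\<^sup>L (poisson_space lam) (cost F k U d) | d. d \<in> admissible lam k}"
  then obtain d where d: "d \<in> admissible lam k" and x: "x = integral\<^sup>L (poisson_space lam) (cost F k U d)" by blast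
  show "0 \<le> x" unfolding x using cost_bounds(1)[OF d F0 Fnn mono] by (intro integral_nonneg_AE) auto
qed

lemma v_lower: "d \<in> admissible lam k \<Longrightarrow> v lam F k U \<le> integral\<^sup>L (poisson_space lam) (cost F k U d)"
  unfolding v_def by (rule cInf_lower[OF _ bdd]) blast

lemma v_greatest:
  assumes "\<And>d. d \<in> admissible lam k \<Longrightarrow> c \<le> integral\<^sup>L (poisson_space lam) (cost F k U d)"
  shows "c \<le> v lam F k U"
  unfolding v_def using zero_adm assms by (intro cInf_greatest) auto

lemma submod:
  assumes TS: "T \<le> S"
  shows "v lam F m T + v lam F (Suc m) S \<le> v lam F (Suc m) T + v lam F m S"
proof -
  let ?I = "\<lambda>k U d. integral\<^sup>L (poisson_space lam) (cost F k U d)"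
  have key: "v lam F m T + v lam F (Suc m) S \<le> ?I (Suc m) T d1 + ?I m S d2"
    if d1: "d1 \<in> admissible lam (Suc m)" and d2: "d2 \<in> admissible lam m" for d1 d2
  proof -
    let ?A = "stratA T S m d1 d2" and ?B = "stratB T S m d1 d2"
    have aA: "?A \<in> admissible lam m" by (rule stratA_adm[OF d1 d2])
    have aB: "?B \<in> admissible lam (Suc m)" by (rule stratB_adm[OF d1 d2])
    have iA: "integrable (poisson_space lam) (cost F m T ?A)" by (rule cost_integrable[OF lam aA F0 Fnn mono])
    have iB: "integrable (poisson_space lam) (cost F (Suc m) S ?B)" by (rule cost_integrable[OF lam aB F0 Fnn mono])
    have i1: "integrable (poisson_space lam) (cost F (Suc m) T d1)" by (rule cost_integrable[OF lam d1 F0 Fnn mono])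
    have i2: "integrable (poisson_space lam) (cost F m S d2)" by (rule cost_integrable[OF lam d2 F0 Fnn mono])
    have "v lam F m T + v lam F (Suc m) S \<le> ?I m T ?A + ?I (Suc m) S ?B"
      using v_lower[OF aA, of T] v_lower[OF aB, of S] by linarith
    also have "\<dots> = integral\<^sup>L (poisson_space lam) (\<lambda>\<omega>. cost F m T ?A \<omega> + cost F (Suc m) S ?B \<omega>)"
      by (rule Bochner_Integration.integral_add[OF iA iB, symmetric])
    also have "\<dots> \<le> integral\<^sup>L (poisson_space lam) (\<lambda>\<omega>. cost F (Suc m) T d1 \<omega> + cost F m S d2 \<omega>)"
    proof (rule Bochner_Integration.integral_mono_AE)
      show "integrable (poisson_space lam) (\<lambda>\<omega>. cost F m T ?A \<omega> + cost F (Suc m) S ?B \<omega>)"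
        using iA iB by (rule Bochner_Integration.integrable_add)
      show "integrable (poisson_space lam) (\<lambda>\<omega>. cost F (Suc m) T d1 \<omega> + cost F m S d2 \<omega>)"
        using i1 i2 by (rule Bochner_Integration.integrable_add)
      show "AE \<omega> in poisson_space lam. cost F m T ?A \<omega> + cost F (Suc m) S ?B \<omega> \<le> cost F (Suc m) T d1 \<omega> + cost F m S d2 \<omega>"
        using AE_nonneg[OF lam] by eventually_elim (rule pointwise[OF cv F0 d1 d2 TS])
    qed
    also have "\<dots> = ?I (Suc m) T d1 + ?I m S d2" by (rule Bochner_Integration.integral_add[OF i1 i2])
    finally show ?thesis .
  qed
  have "v lam F m T + v lam F (Suc m) S - v lam F (Suc m) T \<le> ?I m S d2" if d2: "d2 \<in> admissible lam m" for d2
  proof -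
    have "v lam F m T + v lam F (Suc m) S - ?I m S d2 \<le> v lam F (Suc m) T"
      by (rule v_greatest) (use key[OF _ d2] in force)
    then show ?thesis by linarith
  qed
  then have "v lam F m T + v lam F (Suc m) S - v lam F (Suc m) T \<le> v lam F m S"
    by (rule v_greatest)
  then show ?thesis by linarith
qed

lemma gmono:
  assumes TS: "T \<le> S" and ij: "i \<le> j"
  shows "v lam F i T - v lam F i S \<le> v lam F j T - v lam F j S"
  using ij
proof (induction j rule: dec_induct)
  case (step j)
  then show ?case using submod[OF TS, of j] by linarith
qed simp

end



lemma exists_min:
  fixes h :: "nat \<Rightarrow> real"
  assumes "k \<ge> 1"
  shows "\<exists>a. a \<in> {1..k} \<and> (\<forall>b\<in>{1..k}. h a \<le> h b)"
proof -
  have ne: "h ` {1..k} \<noteq> {}" using assms by auto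
  have "Min (h ` {1..k}) \<in> h ` {1..k}" using ne by (intro Min_in) auto
  then obtain a where a: "a \<in> {1..k}" "h a = Min (h ` {1..k})" by auto
  have "\<forall>b\<in>{1..k}. h a \<le> h b" using a(2) by auto
  then show ?thesis using a(1) by blast
qed

theorem lemma2p11:
  fixes lam :: real and F :: "real \<Rightarrow> real" and S T :: real and k :: nat
  assumes "lam > 0"
    and "\<forall>x\<ge>0. F x \<ge> 0"
    and "strict_mono_on {0..} F"
    and "strictly_convex_on {0..} F"
    and "F 0 = 0"
    and "0 \<le> T" and "T < S"
    and "k \<ge> 1"
  shows "a_opt lam F k S \<le> a_opt lam F k T"
proof -
  define h where "h = (\<lambda>U a. v lam F (k - a) U + F (real a))"
  define Q where "Q = (\<lambda>U a. a \<in> {1..k} \<and> (\<forall>b\<in>{1..k}. h U a \<le> h U b))"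
  have aopt: "a_opt lam F k U = (LEAST a. Q U a)" for U unfolding a_opt_def Q_def h_def ..
  have exQ: "\<exists>a. Q U a" for U unfolding Q_def using exists_min[OF assms(8)] by blast
  have QT: "Q T (a_opt lam F k T)" unfolding aopt using exQ by (metis LeastI)
  have QS: "Q S (a_opt lam F k S)" unfolding aopt using exQ by (metis LeastI)
  define aT where "aT = a_opt lam F k T"
  define aS where "aS = a_opt lam F k S"
  show ?thesis
  proof (rule ccontr)
    assume "\<not> ?thesis"
    then have lt: "aT < aS" unfolding aT_def aS_def by simp
    have g: "v lam F (k - aS) T - v lam F (k - aS) S \<le> v lam F (k - aT) T - v lam F (k - aT) S"
      using lt by (intro gmono[OF assms(1,2,3,4,5)]) (use assms(7) in auto)
    have hT: "h T aT \<le> h T aS" using QT QS unfolding aT_def aS_def Q_def by auto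
    have hS: "h S aT \<le> h S aS" using g hT unfolding h_def by linarith
    have "Q S aT" using QT QS hS unfolding aT_def aS_def Q_def by force
    then have "aS \<le> aT" unfolding aS_def aopt by (rule Least_le)
    then show False using lt by simp
  qed
qed


end
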